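(* Let $H$ be a finite graph with at least two connected components, and let its vertices be numbered $1,\dots,n$ in the order in which they appear in the canonical adjacency matrix of $H$. Let $A$ be the component containing vertex $1$. Then the vertices of $A$ are exactly $1,2,\dots,|A|$, i.e. all vertices of $A$ appear before all other vertices.
   Context: For an $n\times n$ adjacency matrix $\mathbf{M}$ of a finite simple graph (with respect to some ordering of its vertices), its bit-string is obtained by concatenating the entries strictly above the diagonal column by column, left to right, reading each column from top to bottom. The canonical adjacency matrix of a graph $G$ is the unique adjacency matrix of $G$ (over all orderings of its vertices) whose bit-string is lexicographically greatest. *)

theory Defs
  imports Main
begin

definition simple_graph :: "'a set \<Rightarrow> ('a \<Rightarrow> 'a \<Rightarrow> bool) \<Rightarrow> bool" where
  "simple_graph V E \<longleftrightarrow> finite V \<and> (\<forall>x y. E x y \<longrightarrow> x \<in> V \<and> y \<in> V)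
     \<and> (\<forall>x y. E x y \<longrightarrow> E y x) \<and> (\<forall>x. \<not> E x x)"

definition component :: "'a set \<Rightarrow> ('a \<Rightarrow> 'a \<Rightarrow> bool) \<Rightarrow> 'a \<Rightarrow> 'a set" where
  "component V E v = {w \<in> V. (\<lambda>x y. E x y \<and> x \<in> V \<and> y \<in> V)\<^sup>*\<^sup>* v w}"

definition components :: "'a set \<Rightarrow> ('a \<Rightarrow> 'a \<Rightarrow> bool) \<Rightarrow> 'a set set" where
  "components V E = component V E ` V"

text \<open>An ordering of V: a bijection from positions {0..<card V} onto V.
  Position i (0-based) corresponds to vertex number i+1 in the paper.\<close>
definition ordering :: "'a set \<Rightarrow> (nat \<Rightarrow> 'a) \<Rightarrow> bool" where
  "ordering V \<sigma> \<longleftrightarrow> bij_betw \<sigma> {0..<card V} V"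

definition adj_matrix :: "('a \<Rightarrow> 'a \<Rightarrow> bool) \<Rightarrow> (nat \<Rightarrow> 'a) \<Rightarrow> nat \<Rightarrow> nat \<Rightarrow> bool" where
  "adj_matrix E \<sigma> i j = E (\<sigma> i) (\<sigma> j)"

definition bit_string :: "nat \<Rightarrow> (nat \<Rightarrow> nat \<Rightarrow> bool) \<Rightarrow> bool list" where
  "bit_string n M = concat (map (\<lambda>j. map (\<lambda>i. M i j) [0..<j]) [0..<n])"

definition lex_le :: "bool list \<Rightarrow> bool list \<Rightarrow> bool" where
  "lex_le xs ys \<longleftrightarrow> xs = ys \<or> (xs, ys) \<in> lexord {(False, True)}"

definition canonical_ordering :: "'a set \<Rightarrow> ('a \<Rightarrow> 'a \<Rightarrow> bool) \<Rightarrow> (nat \<Rightarrow> 'a) \<Rightarrow> bool" where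
  "canonical_ordering V E \<sigma> \<longleftrightarrow> ordering V \<sigma> \<and>
     (\<forall>\<tau>. ordering V \<tau> \<longrightarrow>
        lex_le (bit_string (card V) (adj_matrix E \<tau>)) (bit_string (card V) (adj_matrix E \<sigma>)))"

end

theory Submission
  imports Defs "HOL-Combinatorics.Permutations"
begin

lemma cross:
  assumes "R\<^sup>*\<^sup>* a b" "a \<in> S" "b \<notin> S"
  shows "\<exists>x y. R x y \<and> x \<in> S \<and> y \<notin> S"
  using assms by (induction rule: rtranclp_induct) auto

lemma lex_step:
  assumes "length c = length d" "set c \<subseteq> {False}" "True \<in> set d"
  shows "(A @ c @ R1, A @ d @ R2) \<in> lexord {(False,True)}"
proof -
  define p where "p = length (takeWhile Not d)"
  have dw: "dropWhile Not d \<noteq> []" using assms(3)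
    by (metis dropWhile_eq_Nil_conv)
  then obtain w where w: "dropWhile Not d = True # w"
    by (metis (full_types) hd_dropWhile list.collapse)
  have tw: "takeWhile Not d = replicate p False"
  proof -
    have "\<forall>y\<in>set (takeWhile Not d). y = False" by (auto dest: set_takeWhileD)
    then show ?thesis unfolding p_def by (simp add: replicate_length_same)
  qed
  have dd: "d = replicate p False @ True # w"
    using takeWhile_dropWhile_id[of Not d] tw w by simp
  have pl: "p < length c" using dd assms(1) by simp
  obtain q where q0: "length c = Suc (p + q)" using less_imp_Suc_add[OF pl] by blast
  then have q: "length c = p + Suc q" by simp
  have cc: "c = replicate p False @ False # replicate q False"
  proof -
    have "\<forall>y\<in>set c. y = False" using assms(2) by auto
    then have "c = replicate (length c) False" by (simp add: replicate_length_same)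
    also have "\<dots> = replicate (p + Suc q) False" by (simp only: q)
    also have "\<dots> = replicate p False @ False # replicate q False" by (simp add: replicate_add replicate_append_same)
    finally show ?thesis .
  qed
  have "(c @ R1, d @ R2) \<in> lexord {(False,True)}"
    by (subst cc, subst dd) (simp add: lexord_append_left_rightI)
  then show ?thesis by (rule lexord_append_leftI)
qed

lemma bs_split:
  assumes "j < n"
  shows "bit_string n M = concat (map (\<lambda>j. map (\<lambda>i. M i j) [0..<j]) [0..<j])
     @ map (\<lambda>i. M i j) [0..<j] @ concat (map (\<lambda>j. map (\<lambda>i. M i j) [0..<j]) [Suc j..<n])"
proof -
  have "[0..<n] = [0..<j] @ [j..<n]"
    using upt_add_eq_append[of 0 j "n - j"] assms by simp
  also have "[j..<n] = j # [Suc j..<n]" using assms by (rule upt_conv_Cons)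
  finally have "[0..<n] = [0..<j] @ j # [Suc j..<n]" .
  then show ?thesis unfolding bit_string_def by simp
qed

theorem mainTheorem8:
  fixes V :: "'a set" and E :: "'a \<Rightarrow> 'a \<Rightarrow> bool" and \<sigma> :: "nat \<Rightarrow> 'a"
  assumes "simple_graph V E"
    and "card (components V E) \<ge> 2"
    and "canonical_ordering V E \<sigma>"
  shows "component V E (\<sigma> 0) = \<sigma> ` {0..<card (component V E (\<sigma> 0))}"
proof -
  define n where "n = card V"
  define R where "R = (\<lambda>x y. E x y \<and> x \<in> V \<and> y \<in> V)"
  define C where "C = component V E (\<sigma> 0)"
  define m where "m = card C"
  have fin: "finite V" using assms(1) by (simp add: simple_graph_def)
  have bij: "bij_betw \<sigma> {0..<n} V" using assms(3) unfolding canonical_ordering_def ordering_def n_def by simp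
  have Vne: "V \<noteq> {}" using assms(2) unfolding components_def by auto
  then have n0: "0 < n" using fin n_def by (simp add: card_gt_0_iff)
  have img: "\<sigma> ` {0..<n} = V" and inj: "inj_on \<sigma> {0..<n}" using bij by (auto simp: bij_betw_def)
  have s0: "\<sigma> 0 \<in> V" using img n0 by auto
  have CV: "C \<subseteq> V" unfolding C_def component_def by auto
  have s0C: "\<sigma> 0 \<in> C" unfolding C_def component_def using s0 by auto
  have Cdef: "\<And>w. w \<in> C \<longleftrightarrow> w \<in> V \<and> R\<^sup>*\<^sup>* (\<sigma> 0) w"
    unfolding C_def component_def R_def by auto
  define P where "P = {i\<in>{0..<n}. \<sigma> i \<in> C}"
  have PC: "\<sigma> ` P = C" using CV img unfolding P_def by auto
  have cP: "card P = m" unfolding m_def using PC inj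
    by (metis (no_types, lifting) P_def card_image inj_on_subset mem_Collect_eq subsetI)
  have Pn: "P \<subseteq> {0..<n}" unfolding P_def by auto
  show ?thesis
  proof (cases "{0..<m} \<subseteq> P")
    case True
    have sub: "\<sigma> ` {0..<m} \<subseteq> C" using True PC by auto
    have "card (\<sigma> ` {0..<m}) = m" using True Pn inj
      by (metis card_atLeastLessThan card_image diff_zero inj_on_subset order_trans)
    then have "\<sigma> ` {0..<m} = C" using sub fin CV
      by (metis card_subset_eq finite_subset m_def)
    then show ?thesis unfolding C_def m_def by simp
  next
    case False
    then obtain j0 where "j0 < m" "j0 \<notin> P" by (force simp: subset_iff)
    define j where "j = (LEAST i. i < m \<and> i \<notin> P)"
    have jm: "j < m" and jP: "j \<notin> P"
      using LeastI[of "\<lambda>i. i < m \<and> i \<notin> P" j0] \<open>j0 < m\<close> \<open>j0 \<notin> P\<close> unfolding j_def by auto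
    have below: "\<And>i. i < j \<Longrightarrow> i \<in> P"
      using not_less_Least[of _ "\<lambda>i. i < m \<and> i \<notin> P"] jm unfolding j_def[symmetric] by force
    have mn: "m \<le> n" using cP Pn by (metis card_atLeastLessThan card_mono diff_zero finite_atLeastLessThan)
    have jn: "j < n" using jm mn by simp
    have sjC: "\<sigma> j \<notin> C" using jP jn unfolding P_def by auto
    have "0 \<in> P" unfolding P_def using n0 s0C by auto
    then have j0: "0 < j" using jP by (cases j) auto
    obtain k where kP: "k \<in> P" and kj: "j < k"
    proof (rule ccontr)
      assume "\<not> thesis"
      then have "\<forall>k\<in>P. k \<le> j" using that by (meson not_le)
      then have "P \<subseteq> {0..<j}" using jP by (auto simp: order.order_iff_strict)
      then have "card P \<le> j" by (metis card_atLeastLessThan card_mono diff_zero finite_atLeastLessThan)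
      then show False using cP jm by simp
    qed
    define S where "S = \<sigma> ` {0..<j}"
    have kn: "k < n" using kP Pn by auto
    have skC: "\<sigma> k \<in> C" using kP P_def by auto
    have "\<sigma> k \<notin> S"
    proof
      assume "\<sigma> k \<in> S"
      then obtain i where "i < j" "\<sigma> k = \<sigma> i" unfolding S_def by auto
      then have "k = i" using inj kn jn by (metis atLeastLessThan_iff inj_on_eq_iff less_trans zero_le)
      then show False using kj \<open>i < j\<close> by simp
    qed
    moreover have "\<sigma> 0 \<in> S" unfolding S_def using j0 by auto
    ultimately obtain x y where xy: "R x y" "x \<in> S" "y \<notin> S"
      using cross[of R "\<sigma> 0" "\<sigma> k" S] skC Cdef by blast
    have yV: "y \<in> V" using xy R_def by auto
    have "R\<^sup>*\<^sup>* (\<sigma> 0) x" using xy(2) below unfolding S_def by (auto simp: P_def Cdef)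
    then have yC: "y \<in> C" using xy(1) yV Cdef by (meson rtranclp.rtrancl_into_rtrancl)
    obtain k' where k'n: "k' < n" and yk: "y = \<sigma> k'" using yV img by force
    have "\<not> k' < j" using xy(3) yk unfolding S_def by auto
    moreover have "k' \<noteq> j" using yC sjC yk by auto
    ultimately have jk': "j < k'" by simp
    obtain i where ij: "i < j" and xi: "x = \<sigma> i" using xy(2) unfolding S_def by auto
    have Eik: "E (\<sigma> i) (\<sigma> k')" using xy(1) xi yk R_def by simp
    define \<tau> where "\<tau> = \<sigma> \<circ> transpose j k'"
    have perm: "transpose j k' permutes {0..<n}" using jn k'n by (intro permutes_swap_id) auto
    have "bij_betw \<tau> {0..<n} V" unfolding \<tau>_def
      using bij_betw_trans[OF permutes_imp_bij[OF perm] bij] .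
    then have ordt: "ordering V \<tau>" unfolding ordering_def n_def by simp
    have lle: "lex_le (bit_string n (adj_matrix E \<tau>)) (bit_string n (adj_matrix E \<sigma>))"
      using assms(3) ordt unfolding canonical_ordering_def n_def by blast
    have tlow: "\<And>i. i < j \<Longrightarrow> \<tau> i = \<sigma> i" unfolding \<tau>_def using jk' by auto
    have tj: "\<tau> j = \<sigma> k'" unfolding \<tau>_def by simp
    have pre: "map (\<lambda>j. map (\<lambda>i. adj_matrix E \<tau> i j) [0..<j]) [0..<j]
             = map (\<lambda>j. map (\<lambda>i. adj_matrix E \<sigma> i j) [0..<j]) [0..<j]"
      by (auto simp: adj_matrix_def tlow)
    have cs: "set (map (\<lambda>i. adj_matrix E \<sigma> i j) [0..<j]) \<subseteq> {False}"
    proof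
      fix b assume "b \<in> set (map (\<lambda>i. adj_matrix E \<sigma> i j) [0..<j])"
      then obtain i' where i': "i' < j" "b = E (\<sigma> i') (\<sigma> j)" by (auto simp: adj_matrix_def)
      have "\<sigma> i' \<in> C" using below[OF i'(1)] P_def by auto
      moreover have "\<sigma> j \<in> V" using jn img by auto
      ultimately have "E (\<sigma> i') (\<sigma> j) \<Longrightarrow> \<sigma> j \<in> C"
      proof -
        assume a1: "\<sigma> i' \<in> C" and a2: "\<sigma> j \<in> V" and e: "E (\<sigma> i') (\<sigma> j)"
        have "R\<^sup>*\<^sup>* (\<sigma> 0) (\<sigma> i')" using a1 Cdef by blast
        moreover have "R (\<sigma> i') (\<sigma> j)" using e a1 a2 CV R_def by auto
        ultimately have "R\<^sup>*\<^sup>* (\<sigma> 0) (\<sigma> j)" by (rule rtranclp.rtrancl_into_rtrancl)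
        then show ?thesis using Cdef a2 by blast
      qed
      then show "b \<in> {False}" using sjC i' by auto
    qed
    have ds: "True \<in> set (map (\<lambda>i. adj_matrix E \<tau> i j) [0..<j])"
      using ij Eik tlow tj by (force simp: adj_matrix_def)
    have lt: "(bit_string n (adj_matrix E \<sigma>), bit_string n (adj_matrix E \<tau>)) \<in> lexord {(False,True)}"
      unfolding bs_split[OF jn, of "adj_matrix E \<sigma>"] bs_split[OF jn, of "adj_matrix E \<tau>"] pre
      by (rule lex_step[OF _ cs ds]) simp
    have irr: "\<And>xs. (xs, xs) \<notin> lexord {(False,True)}" by (rule lexord_irreflexive) auto
    have tr: "trans {(False,True)}" by (auto simp: trans_def)
    from lle lt irr have False
      unfolding lex_le_def by (metis lexord_trans tr)
    then show ?thesis by simp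
  qed
qed

end
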